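(* Let $A=\{\mathbf{a}_1,\dots,\mathbf{a}_m\}\subset\mathbb{Z}^n$ with $\mathbb{N}A$ an affine semigroup, and let $E_1,E_2$ be nonempty disjoint subsets of $\{1,\dots,m\}$ with $E_1\cup E_2=\{1,\dots,m\}$. Then $\mathbb{N}A$ is the s-gluing of $\mathbb{N}A^{E_1}$ and $\mathbb{N}A^{E_2}$ if and only if $\sigma=\mathrm{pos}_{\mathbb{Q}}(A)$ is the direct sum $\sigma_{E_1}\oplus\sigma_{E_2}$, i.e. if and only if there exists $\mathbf{a}\in\sigma_{E_1}\cap\sigma_{E_2}$ with $\mathrm{span}_{\mathbb{Q}}(\sigma_{E_1})\cap\mathrm{span}_{\mathbb{Q}}(\sigma_{E_2})=\mathbb{Q}\mathbf{a}$.
   Context: $\mathbb{N}A$ is the set of nonnegative integer combinations of $A$; an affine semigroup is a finitely generated subsemigroup $S\subset\mathbb{Z}^n$ with $S\cap(-S)=\{\mathbf0\}$. For $E\subset\{1,\dots,m\}$, $A^E=\{\mathbf{a}_i:i\in E\}$ and $\sigma_E=\mathrm{pos}_{\mathbb{Q}}(A^E)$ (nonnegative rational combinations); note $\sigma=\mathrm{pos}_{\mathbb{Q}}(\sigma_{E_1}\cup\sigma_{E_2})$. $\mathbb{N}A$ is the s-gluing of $\mathbb{N}A^{E_1}$ and $\mathbb{N}A^{E_2}$ if there is an integer vector $\mathbf{a}$ with $\mathbb{Z}\mathbf{a}=\mathbb{Z}A^{E_1}\cap\mathbb{Z}A^{E_2}$ and $t\mathbf{a}\in\mathbb{N}A^{E_1}\cap\mathbb{N}A^{E_2}$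 for some positive integer $t$. *)

theory Defs
  imports "HOL-Analysis.Analysis"
begin

text \<open>Generators a_1,...,a_m of Z^n are an indexed family a :: nat => int^'n, indices {1..m}.
  Integer vectors are embedded in Q^n componentwise.\<close>

definition ratv :: "int ^ 'n \<Rightarrow> rat ^ 'n" where
  "ratv v = (\<chi> i. of_int (v $ i))"

definition NA :: "(nat \<Rightarrow> int ^ 'n) \<Rightarrow> nat set \<Rightarrow> (int ^ 'n) set" where
  "NA a E = {\<Sum>i\<in>E. (int (c i)) *s a i | c :: nat \<Rightarrow> nat. True}"

definition ZA :: "(nat \<Rightarrow> int ^ 'n) \<Rightarrow> nat set \<Rightarrow> (int ^ 'n) set" where
  "ZA a E = {\<Sum>i\<in>E. c i *s a i | c :: nat \<Rightarrow> int. True}"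

definition posQ :: "(nat \<Rightarrow> int ^ 'n) \<Rightarrow> nat set \<Rightarrow> (rat ^ 'n) set" where
  "posQ a E = {\<Sum>i\<in>E. c i *s ratv (a i) | c :: nat \<Rightarrow> rat. \<forall>i\<in>E. c i \<ge> 0}"

definition spanQ :: "(rat ^ 'n) set \<Rightarrow> (rat ^ 'n) set" where
  "spanQ S = {\<Sum>x\<in>F. c x *s x | F c. finite F \<and> F \<subseteq> S}"

text \<open>affine semigroup: N A (finitely generated by construction) is pointed\<close>
definition affine_semigroup :: "(int ^ 'n) set \<Rightarrow> bool" where
  "affine_semigroup S \<longleftrightarrow> S \<inter> uminus ` S = {0}"

definition s_gluing :: "(nat \<Rightarrow> int ^ 'n) \<Rightarrow> nat set \<Rightarrow> nat set \<Rightarrow> bool" where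
  "s_gluing a E1 E2 \<longleftrightarrow>
     (\<exists>v :: int ^ 'n. ZA a E1 \<inter> ZA a E2 = {k *s v | k :: int. True} \<and>
        (\<exists>t :: nat. t > 0 \<and> int t *s v \<in> NA a E1 \<inter> NA a E2))"

end

theory Submission
  imports Defs
begin


lemma ratv_add: "ratv (x + y) = ratv x + ratv y"
  by (simp add: ratv_def vec_eq_iff)
lemma ratv_diff: "ratv (x - y) = ratv x - ratv y"
  by (simp add: ratv_def vec_eq_iff)
lemma ratv_zero[simp]: "ratv 0 = 0"
  by (simp add: ratv_def vec_eq_iff)
lemma ratv_scale: "ratv (k *s x) = of_int k *s ratv x"
  by (simp add: ratv_def vec_eq_iff)
lemma ratv_sum: "ratv (sum f E) = (\<Sum>i\<in>E. ratv (f i))"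
  by (simp add: ratv_def vec_eq_iff)
lemma ratv_inj: "ratv x = ratv y \<Longrightarrow> x = y"
  by (simp add: ratv_def vec_eq_iff)
lemma ratv_eq0: "ratv x = 0 \<longleftrightarrow> x = 0"
  by (simp add: ratv_def vec_eq_iff)

lemma spanQ_vec: "spanQ S = vec.span S"
  unfolding spanQ_def vec.span_explicit by blast

lemma ZA_add: "x \<in> ZA a E \<Longrightarrow> y \<in> ZA a E \<Longrightarrow> x + y \<in> ZA a E"
proof -
  assume "x \<in> ZA a E" "y \<in> ZA a E"
  then obtain c d where "x = (\<Sum>i\<in>E. c i *s a i)" "y = (\<Sum>i\<in>E. d i *s a i)"
    unfolding ZA_def by auto
  then have "x + y = (\<Sum>i\<in>E. (c i + d i) *s a i)"
    by (simp add: vec_eq_iff sum.distrib algebra_simps)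
  then show ?thesis unfolding ZA_def by (auto intro!: exI[of _ "\<lambda>i. c i + d i"])
qed

lemma ZA_scale: "x \<in> ZA a E \<Longrightarrow> k *s x \<in> ZA a E"
proof -
  assume "x \<in> ZA a E"
  then obtain c where "x = (\<Sum>i\<in>E. c i *s a i)"
    unfolding ZA_def by auto
  then have "k *s x = (\<Sum>i\<in>E. (k * c i) *s a i)"
    by (simp add: vec_eq_iff sum_distrib_left algebra_simps)
  then show ?thesis unfolding ZA_def by (auto intro!: exI[of _ "\<lambda>i. k * c i"])
qed

lemma ZA_neg: "x \<in> ZA a E \<Longrightarrow> - x \<in> ZA a E"
proof -
  assume "x \<in> ZA a E"
  then have "(-1) *s x \<in> ZA a E" by (rule ZA_scale)
  moreover have "(-1::int) *s x = - x" by (simp add: vec_eq_iff)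
  ultimately show ?thesis by simp
qed

lemma ZA_diff: "x \<in> ZA a E \<Longrightarrow> y \<in> ZA a E \<Longrightarrow> x - y \<in> ZA a E"
  using ZA_add[of x a E "- y"] ZA_neg[of y a E] by simp

lemma NA_ZA: "x \<in> NA a E \<Longrightarrow> x \<in> ZA a E"
proof -
  assume "x \<in> NA a E"
  then obtain c where "x = (\<Sum>i\<in>E. int (c i) *s a i)"
    unfolding NA_def by auto
  then show ?thesis unfolding ZA_def by (auto intro!: exI[of _ "\<lambda>i. int (c i)"])
qed

lemma NA_scale: "x \<in> NA a E \<Longrightarrow> int k *s x \<in> NA a E"
proof -
  assume "x \<in> NA a E"
  then obtain c where "x = (\<Sum>i\<in>E. int (c i) *s a i)"
    unfolding NA_def by auto
  then have "int k *s x = (\<Sum>i\<in>E. int (k * c i) *s a i)"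
    by (simp add: vec_eq_iff sum_distrib_left algebra_simps)
  then show ?thesis unfolding NA_def by (auto intro!: exI[of _ "\<lambda>i. k * c i"])
qed

lemma NA_zero: "0 \<in> NA a E"
  unfolding NA_def by (auto intro!: exI[of _ "\<lambda>_. 0"])

lemma NA_posQ: "x \<in> NA a E \<Longrightarrow> ratv x \<in> posQ a E"
proof -
  assume "x \<in> NA a E"
  then obtain c where "x = (\<Sum>i\<in>E. int (c i) *s a i)"
    unfolding NA_def by auto
  then have "ratv x = (\<Sum>i\<in>E. of_nat (c i) *s ratv (a i))"
    by (simp add: ratv_sum ratv_scale)
  moreover have "\<forall>i\<in>E. (of_nat (c i)::rat) \<ge> 0" by simp
  ultimately show ?thesis unfolding posQ_def by (auto intro!: exI[of _ "\<lambda>i. of_nat (c i)"])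
qed

lemma denom:
  fixes c :: "nat \<Rightarrow> rat"
  assumes "finite E"
  shows "\<exists>d::int. d > 0 \<and> (\<forall>i\<in>E. \<exists>k::int. of_int d * c i = of_int k)"
  using assms
proof (induction E rule: finite_induct)
  case empty
  then show ?case by (intro exI[of _ 1]) auto
next
  case (insert j E)
  then obtain d where d: "d > 0" "\<forall>i\<in>E. \<exists>k::int. of_int d * c i = of_int k" by blast
  obtain nn dd where q: "quotient_of (c j) = (nn, dd)" by (cases "quotient_of (c j)")
  have dd: "dd > 0" using quotient_of_denom_pos[OF q] .
  have cj: "c j = of_int nn / of_int dd" using quotient_of_div[OF q] .
  show ?case
  proof (rule exI[of _ "d * dd"], intro conjI ballI)
    show "d * dd > 0" using d dd by simp
    fix i assume "i \<in> insert j E"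
    then show "\<exists>k::int. of_int (d * dd) * c i = of_int k"
    proof (elim insertE)
      assume "i = j"
      then show ?thesis using dd cj by (intro exI[of _ "d * nn"]) simp
    next
      assume "i \<in> E"
      then obtain k where "of_int d * c i = of_int k" using d by blast
      then show ?thesis by (intro exI[of _ "k * dd"]) (simp add: algebra_simps)
    qed
  qed
qed



definition LQ :: "(nat \<Rightarrow> int ^ 'n) \<Rightarrow> nat set \<Rightarrow> (rat ^ 'n) set" where
  "LQ a E = {\<Sum>i\<in>E. c i *s ratv (a i) | c :: nat \<Rightarrow> rat. True}"

lemma LQ_subspace: "vec.subspace (LQ a E)"
proof (rule vec.subspaceI)
  show "0 \<in> LQ a E" unfolding LQ_def by (auto intro!: exI[of _ "\<lambda>_. 0"])
next
  fix x y assume "x \<in> LQ a E" "y \<in> LQ a E"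
  then obtain c d where "x = (\<Sum>i\<in>E. c i *s ratv (a i))" "y = (\<Sum>i\<in>E. d i *s ratv (a i))"
    unfolding LQ_def by auto
  then have "x + y = (\<Sum>i\<in>E. (c i + d i) *s ratv (a i))"
    by (simp add: vec_eq_iff sum.distrib algebra_simps)
  then show "x + y \<in> LQ a E" unfolding LQ_def by (auto intro!: exI[of _ "\<lambda>i. c i + d i"])
next
  fix k x assume "x \<in> LQ a E"
  then obtain c where "x = (\<Sum>i\<in>E. c i *s ratv (a i))"
    unfolding LQ_def by auto
  then have "k *s x = (\<Sum>i\<in>E. (k * c i) *s ratv (a i))"
    by (simp add: vec_eq_iff sum_distrib_left algebra_simps)
  then show "k *s x \<in> LQ a E" unfolding LQ_def by (auto intro!: exI[of _ "\<lambda>i. k * c i"])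
qed

lemma posQ_LQ: "posQ a E \<subseteq> LQ a E"
  unfolding posQ_def LQ_def by blast

lemma gen_posQ: "finite E \<Longrightarrow> i \<in> E \<Longrightarrow> ratv (a i) \<in> posQ a E"
proof -
  assume "finite E" "i \<in> E"
  then have "ratv (a i) = (\<Sum>j\<in>E. (if j = i then 1 else 0) *s ratv (a j))"
    by (simp add: if_distrib[of "\<lambda>r. r *s v" for v] sum.delta cong: if_cong)
  moreover have "\<forall>j\<in>E. (if j = i then 1 else 0::rat) \<ge> 0" by simp
  ultimately show ?thesis unfolding posQ_def
    by (auto intro!: exI[of _ "\<lambda>j. if j = i then 1 else 0"])
qed

lemma span_posQ: "finite E \<Longrightarrow> spanQ (posQ a E) = LQ a E"
proof
  show "spanQ (posQ a E) \<subseteq> LQ a E"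
    unfolding spanQ_vec by (rule vec.span_minimal[OF posQ_LQ LQ_subspace])
next
  assume fin: "finite E"
  show "LQ a E \<subseteq> spanQ (posQ a E)"
  proof
    fix x assume "x \<in> LQ a E"
    then obtain c where x: "x = (\<Sum>i\<in>E. c i *s ratv (a i))"
      unfolding LQ_def by auto
    show "x \<in> spanQ (posQ a E)"
      unfolding spanQ_vec x
      by (rule vec.span_sum, rule vec.span_scale, rule vec.span_base, rule gen_posQ[OF fin]) 
qed
qed

lemma clearZ:
  assumes "finite E" "x \<in> LQ a E"
  shows "\<exists>d::int. d > 0 \<and> (\<exists>z\<in>ZA a E. of_int d *s x = ratv z)"
proof -
  obtain c where x: "x = (\<Sum>i\<in>E. c i *s ratv (a i))"
    using assms(2) unfolding LQ_def by auto
  obtain d where d: "d > 0" "\<forall>i\<in>E. \<exists>k::int. of_int d * c i = of_int k"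
    using denom[OF assms(1), of c] by blast
  then obtain k where k: "\<forall>i\<in>E. of_int d * c i = of_int (k i)" by metis
  have "ratv (\<Sum>i\<in>E. k i *s a i) = (\<Sum>i\<in>E. of_int (k i) *s ratv (a i))"
    by (simp add: ratv_sum ratv_scale)
  also have "\<dots> = (\<Sum>i\<in>E. (of_int d * c i) *s ratv (a i))"
    using k by (intro sum.cong) auto
  also have "\<dots> = of_int d *s x"
    unfolding x by (simp add: vec_eq_iff sum_distrib_left algebra_simps)
  finally have e: "of_int d *s x = ratv (\<Sum>i\<in>E. k i *s a i)" by simp
  have m: "(\<Sum>i\<in>E. k i *s a i) \<in> ZA a E" unfolding ZA_def by (auto intro!: exI[of _ k])
  show ?thesis using d(1) e m by blast
qed

lemma clearN:
  assumes "finite E" "x \<in> posQ a E"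
  shows "\<exists>d::int. d > 0 \<and> (\<exists>z\<in>NA a E. of_int d *s x = ratv z)"
proof -
  obtain c where x: "x = (\<Sum>i\<in>E. c i *s ratv (a i))" and c: "\<forall>i\<in>E. c i \<ge> 0"
    using assms(2) unfolding posQ_def by auto
  obtain d where d: "d > 0" "\<forall>i\<in>E. \<exists>k::int. of_int d * c i = of_int k"
    using denom[OF assms(1), of c] by blast
  then obtain k where k: "\<forall>i\<in>E. of_int d * c i = of_int (k i)" by metis
  have kpos: "\<forall>i\<in>E. k i \<ge> 0"
  proof
    fix i assume i: "i \<in> E"
    have "(0::rat) \<le> of_int d * c i" using c i d(1) by simp
    then have "(0::rat) \<le> of_int (k i)" using k i by simp
    then show "k i \<ge> 0" by simp
  qed
  have "ratv (\<Sum>i\<in>E. int (nat (k i)) *s a i) = (\<Sum>i\<in>E. of_int (k i) *s ratv (a i))"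
    using kpos by (simp add: ratv_sum ratv_scale)
  also have "\<dots> = (\<Sum>i\<in>E. (of_int d * c i) *s ratv (a i))"
    using k by (intro sum.cong) auto
  also have "\<dots> = of_int d *s x"
    unfolding x by (simp add: vec_eq_iff sum_distrib_left algebra_simps)
  finally have e: "of_int d *s x = ratv (\<Sum>i\<in>E. int (nat (k i)) *s a i)" by simp
  have m: "(\<Sum>i\<in>E. int (nat (k i)) *s a i) \<in> NA a E" unfolding NA_def
    by (auto intro!: exI[of _ "\<lambda>i. nat (k i)"])
  show ?thesis using d(1) e m by blast
qed



lemma ZA_LQ: "z \<in> ZA a E \<Longrightarrow> ratv z \<in> LQ a E"
proof -
  assume "z \<in> ZA a E"
  then obtain c where "z = (\<Sum>i\<in>E. c i *s a i)" unfolding ZA_def by auto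
  then have "ratv z = (\<Sum>i\<in>E. of_int (c i) *s ratv (a i))" by (simp add: ratv_sum ratv_scale)
  then show ?thesis unfolding LQ_def by (auto intro!: exI[of _ "\<lambda>i. of_int (c i)"])
qed

lemma sglI:
  assumes "ZA a E1 \<inter> ZA a E2 = {k *s v | k. True}" "t > 0" "int t *s v \<in> NA a E1 \<inter> NA a E2"
  shows "s_gluing a E1 E2"
  unfolding s_gluing_def using assms by blast

lemma negline: fixes w :: "int ^ 'n" shows "{k *s w | k::int. True} = {k *s (- w) | k. True}"
proof (rule set_eqI)
  fix x :: "int ^ 'n"
  have "(\<exists>k. x = k *s w) \<longleftrightarrow> (\<exists>k. x = k *s (- w))"
  proof
    assume "\<exists>k. x = k *s w" then obtain k where "x = k *s w" by blast
    then have "x = (- k) *s (- w)" by (simp add: vec_eq_iff)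
    then show "\<exists>k. x = k *s (- w)" by blast
  next
    assume "\<exists>k. x = k *s (- w)" then obtain k where "x = k *s (- w)" by blast
    then have "x = (- k) *s w" by (simp add: vec_eq_iff)
    then show "\<exists>k. x = k *s w" by blast
  qed
  then show "x \<in> {k *s w | k::int. True} \<longleftrightarrow> x \<in> {k *s (- w) | k. True}" by blast
qed

theorem proposition4p2:
  fixes a :: "nat \<Rightarrow> int ^ 'n" and m :: nat and E1 E2 :: "nat set"
  assumes "inj_on a {1..m}"
    and "affine_semigroup (NA a {1..m})"
    and "E1 \<noteq> {}" and "E2 \<noteq> {}" and "E1 \<inter> E2 = {}" and "E1 \<union> E2 = {1..m}"
  shows "s_gluing a E1 E2 \<longleftrightarrow>
    (\<exists>v \<in> posQ a E1 \<inter> posQ a E2.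
       spanQ (posQ a E1) \<inter> spanQ (posQ a E2) = {q *s v | q :: rat. True})"
proof -
  have fin1: "finite E1" using assms(6) by (metis finite_Un finite_atLeastAtMost)
  have fin2: "finite E2" using assms(6) by (metis finite_Un finite_atLeastAtMost)
  show ?thesis
  proof
    assume "s_gluing a E1 E2"
    then obtain w t where G: "ZA a E1 \<inter> ZA a E2 = {k *s w | k. True}"
      and t: "t > 0" "int t *s w \<in> NA a E1 \<inter> NA a E2"
      unfolding s_gluing_def by blast
    define v where "v = ratv (int t *s w)"
    have v1: "v \<in> posQ a E1" "v \<in> posQ a E2" using NA_posQ t(2) unfolding v_def by auto
    have "spanQ (posQ a E1) \<inter> spanQ (posQ a E2) = {q *s v | q. True}"
    proof (rule set_eqI, rule iffI)
      fix x assume "x \<in> spanQ (posQ a E1) \<inter> spanQ (posQ a E2)"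
      then have x: "x \<in> LQ a E1" "x \<in> LQ a E2" using span_posQ fin1 fin2 by auto
      obtain d1 z1 where d1: "d1 > 0" "z1 \<in> ZA a E1" "of_int d1 *s x = ratv z1"
        using clearZ[OF fin1 x(1)] by blast
      obtain d2 z2 where d2: "d2 > 0" "z2 \<in> ZA a E2" "of_int d2 *s x = ratv z2"
        using clearZ[OF fin2 x(2)] by blast
      have e1: "ratv (d2 *s z1) = of_int (d1 * d2) *s x"
        unfolding ratv_scale d1(3)[symmetric] by (simp add: vec_eq_iff)
      have e2: "ratv (d1 *s z2) = of_int (d1 * d2) *s x"
        unfolding ratv_scale d2(3)[symmetric] by (simp add: vec_eq_iff)
      have "d2 *s z1 = d1 *s z2" using e1 e2 ratv_inj by metis
      then have "d2 *s z1 \<in> ZA a E1 \<inter> ZA a E2" using ZA_scale[OF d1(2), of d2] ZA_scale[OF d2(2), of d1] by simp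
      then obtain k where k: "d2 *s z1 = k *s w" using G by blast
      have ek: "of_int (d1 * d2) *s x = of_int k *s ratv w"
        using e1 k by (simp add: ratv_scale)
      have "x = (of_int k / (of_int (d1 * d2) * of_nat t)) *s v"
      proof (rule vec_eq_iff[THEN iffD2], rule allI)
        fix i
        have "of_int (d1 * d2) * x $ i = of_int k * ratv w $ i"
          using ek by (simp add: vec_eq_iff)
        moreover have "v $ i = of_nat t * ratv w $ i"
          unfolding v_def ratv_def by simp
        ultimately show "x $ i = ((of_int k / (of_int (d1 * d2) * of_nat t)) *s v) $ i"
          using d1(1) d2(1) t(1) by (simp add: field_simps)
      qed
      then show "x \<in> {q *s v | q. True}" by blast
    next
      fix x assume "x \<in> {q *s v | q. True}"
      then obtain q where x: "x = q *s v" by blast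
      show "x \<in> spanQ (posQ a E1) \<inter> spanQ (posQ a E2)"
        unfolding spanQ_vec x using v1 vec.span_scale vec.span_base by blast
    qed
    then show "\<exists>v \<in> posQ a E1 \<inter> posQ a E2.
       spanQ (posQ a E1) \<inter> spanQ (posQ a E2) = {q *s v | q :: rat. True}"
      using v1 by blast
  next
    assume "\<exists>v \<in> posQ a E1 \<inter> posQ a E2.
       spanQ (posQ a E1) \<inter> spanQ (posQ a E2) = {q *s v | q :: rat. True}"
    then obtain v where v1: "v \<in> posQ a E1" "v \<in> posQ a E2"
      and eq: "spanQ (posQ a E1) \<inter> spanQ (posQ a E2) = {q *s v | q :: rat. True}"
      by blast
    obtain d1 n1 where d1: "d1 > 0" "n1 \<in> NA a E1" "of_int d1 *s v = ratv n1"
      using clearN[OF fin1 v1(1)] by blast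
    obtain d2 n2 where d2: "d2 > 0" "n2 \<in> NA a E2" "of_int d2 *s v = ratv n2"
      using clearN[OF fin2 v1(2)] by blast
    define p where "p = d2 *s n1"
    have pv: "ratv p = of_int (d1 * d2) *s v"
      unfolding p_def ratv_scale d1(3)[symmetric] by (simp add: vec_eq_iff)
    have e2: "ratv (d1 *s n2) = of_int (d1 * d2) *s v"
      unfolding ratv_scale d2(3)[symmetric] by (simp add: vec_eq_iff)
    have pe: "p = d1 *s n2" using pv e2 ratv_inj by metis
    have pN1: "p \<in> NA a E1" unfolding p_def using NA_scale[OF d1(2), of "nat d2"] d2(1) by simp
    have pN2: "p \<in> NA a E2" unfolding pe using NA_scale[OF d2(2), of "nat d1"] d1(1) by simp
    define G where "G = ZA a E1 \<inter> ZA a E2"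
    have pG: "p \<in> G" unfolding G_def using pN1 pN2 NA_ZA by blast
    have Gscale: "\<And>z k. z \<in> G \<Longrightarrow> k *s z \<in> G" unfolding G_def using ZA_scale by blast
    have Gdiff: "\<And>z y. z \<in> G \<Longrightarrow> y \<in> G \<Longrightarrow> z - y \<in> G" unfolding G_def using ZA_diff by blast
    have Gneg: "\<And>z. z \<in> G \<Longrightarrow> - z \<in> G" unfolding G_def using ZA_neg by blast
    have key: "\<exists>r. ratv z = r *s ratv p" if z: "z \<in> G" for z
    proof -
      have "ratv z \<in> spanQ (posQ a E1) \<inter> spanQ (posQ a E2)"
        using z ZA_LQ[of z a E1] ZA_LQ[of z a E2] span_posQ[OF fin1, of a] span_posQ[OF fin2, of a]
        unfolding G_def by auto
      then obtain q where q: "ratv z = q *s v" using eq by blast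
      have "ratv z = (q / of_int (d1 * d2)) *s ratv p"
        unfolding q pv using d1(1) d2(1) by (simp add: vec_eq_iff)
      then show ?thesis by blast
    qed
    show "s_gluing a E1 E2"
    proof (cases "p = 0")
      case True
      have "\<forall>z\<in>G. z = 0"
      proof
        fix z assume "z \<in> G"
        then obtain r where "ratv z = r *s ratv p" using key by blast
        then have "ratv z = 0" using True by simp
        then show "z = 0" using ratv_eq0 by blast
      qed
      then have "G = {0}" using pG True by blast
      moreover have "{k *s 0 | k :: int. True} = {0::int^'n}" by simp
      ultimately have zg: "ZA a E1 \<inter> ZA a E2 = {k *s 0 | k :: int. True}" unfolding G_def by simp
      have z1: "int 1 *s (0::int^'n) \<in> NA a E1 \<inter> NA a E2" using NA_zero[of a E1] NA_zero[of a E2] by simp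
      show ?thesis by (rule sglI[OF zg _ z1]) simp
    next
      case False
      then obtain j where pj: "p $ j \<noteq> 0" by (auto simp: vec_eq_iff)
      have zero_j: "z = 0" if zG: "z \<in> G" and zj: "z $ j = 0" for z
      proof -
        obtain r where r: "ratv z = r *s ratv p" using key zG by blast
        then have "ratv z $ j = r * ratv p $ j" by simp
        then have "r = 0" using zj pj by (simp add: ratv_def)
        then have "ratv z = 0" using r by simp
        then show ?thesis using ratv_eq0 by blast
      qed
      define P where "P n \<longleftrightarrow> n > 0 \<and> (\<exists>z\<in>G. z $ j = int n)" for n :: nat
      have "P (nat \<bar>p $ j\<bar>)"
      proof (cases "p $ j > 0")
        case True then show ?thesis unfolding P_def using pG by (intro conjI bexI[of _ p]) auto
      next
        case False then show ?thesis unfolding P_def using pG pj Gneg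
          by (intro conjI bexI[of _ "- p"]) auto
      qed
      define g where "g = (LEAST n. P n)"
      have Pg: "P g" unfolding g_def by (rule LeastI) fact
      have minim: "\<And>n. P n \<Longrightarrow> g \<le> n" unfolding g_def by (rule Least_le)
      obtain w where w: "w \<in> G" "w $ j = int g" and gpos: "g > 0" using Pg unfolding P_def by blast
      have all: "\<exists>k. z = k *s w" if z: "z \<in> G" for z
      proof -
        define k where "k = z $ j div int g"
        define y where "y = z - k *s w"
        have yG: "y \<in> G" unfolding y_def using Gdiff Gscale z w(1) by blast
        have yj: "y $ j = z $ j mod int g"
          unfolding y_def k_def using w(2) by simp (metis minus_div_mult_eq_mod mult.commute)
        have "y $ j = 0"
        proof (rule ccontr)
          assume ne: "y $ j \<noteq> 0"
          have "y $ j \<ge> 0" "y $ j < int g" using yj gpos by simp_all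
          then have "P (nat (y $ j))" unfolding P_def using ne yG by auto
          then have "g \<le> nat (y $ j)" by (rule minim)
          then show False using \<open>y $ j < int g\<close> \<open>y $ j \<ge> 0\<close> le_nat_iff by auto
        qed
        then have "y = 0" using zero_j yG by blast
        then show ?thesis unfolding y_def by (intro exI[of _ k]) simp
      qed
      have GW: "G = {k *s w | k. True}" using all Gscale w(1) by blast
      obtain k where pk: "p = k *s w" using all pG by blast
      have k0: "k \<noteq> 0" using False pk by auto
      show ?thesis
      proof (cases "k > 0")
        case True
        have h3: "int (nat k) *s w \<in> NA a E1 \<inter> NA a E2" using True pk pN1 pN2 by simp
        have h2: "nat k > 0" using True by simp
        have h1: "ZA a E1 \<inter> ZA a E2 = {k *s w | k. True}" using GW unfolding G_def .
        show ?thesis by (rule sglI[OF h1 h2 h3])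
      next
        case kn: False
        have "int (nat (- k)) *s (- w) = p" using kn pk by (simp add: vec_eq_iff)
        then have h3: "int (nat (- k)) *s (- w) \<in> NA a E1 \<inter> NA a E2" using pN1 pN2 by simp
        have h1: "ZA a E1 \<inter> ZA a E2 = {k *s (- w) | k. True}"
          using GW negline[of w] unfolding G_def by simp
        have h2: "nat (- k) > 0" using kn k0 by simp
        show ?thesis by (rule sglI[OF h1 h2 h3])
      qed
    qed
  qed
qed

end
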